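(* Let $R$ be an NC-nilpotent algebra, $\pi:R\to R_{ab}$ the abelianization map, and $\overline S\subset R_{ab}-\{0\}$ any multiplicative subset. Then $S=\pi^{-1}(\overline S)$ satisfies the Ore conditions: (OL1) for any $a\in R$, $s\in S$ there are $b\in R$, $u\in S$ with $ua=bs$; (OL2) if $as=0$ with $a\in R,s\in S$ then $ta=0$ for some $t\in S$; (OR1) for any $b\in R$, $u\in S$ there are $a\in R$, $s\in S$ with $ua=bs$; (OR2) if $sa=0$ with $a\in R,s\in S$ then $at=0$ for some $t\in S$.
   Context: Algebras are associative unital $\mathbf{C}$-algebras. $R_{ab}=R/[R,R]$. NC-filtration: with $R^{\rm Lie}_1=R$, $R^{\rm Lie}_m=[R,R^{\rm Lie}_{m-1}]$ ($[a,b]=ab-ba$), $F^dR=\sum_m\sum_{i_1+\dots+i_m-m=d}R\,R^{\rm Lie}_{i_1}R\cdots R\,R^{\rm Lie}_{i_m}R$. $R$ is NC-nilpotent if $F^iR=0$ for $i\gg0$. *)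

theory Defs
  imports Complex_Main
begin

class complex_algebra_1 = ring_1 +
  fixes scaleC :: "complex \<Rightarrow> 'a \<Rightarrow> 'a"
  assumes scaleC_add_right: "scaleC c (x + y) = scaleC c x + scaleC c y"
    and scaleC_add_left: "scaleC (c + d) x = scaleC c x + scaleC d x"
    and scaleC_scaleC: "scaleC c (scaleC d x) = scaleC (c * d) x"
    and scaleC_one: "scaleC 1 x = x"
    and scaleC_mult_left: "scaleC c (x * y) = scaleC c x * y"
    and scaleC_mult_right: "scaleC c (x * y) = x * scaleC c y"

inductive_set cspan :: "'a::complex_algebra_1 set \<Rightarrow> 'a set" for X where
  cspan_zero: "0 \<in> cspan X"
| cspan_base: "x \<in> X \<Longrightarrow> x \<in> cspan X"
| cspan_add: "x \<in> cspan X \<Longrightarrow> y \<in> cspan X \<Longrightarrow> x + y \<in> cspan X"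
| cspan_scale: "x \<in> cspan X \<Longrightarrow> scaleC c x \<in> cspan X"

definition commutator :: "'a::ring \<Rightarrow> 'a \<Rightarrow> 'a" where
  "commutator a b = a * b - b * a"

text \<open>Lower central series: lie_pow 1 = R, lie_pow (m+1) = [R, lie_pow m]
  (linear span of commutators). The index 0 is not used (set to R by convention).\<close>
fun lie_pow :: "nat \<Rightarrow> 'a::complex_algebra_1 set" where
  "lie_pow 0 = UNIV"
| "lie_pow (Suc 0) = UNIV"
| "lie_pow (Suc (Suc m)) = cspan {commutator a b | a b. b \<in> lie_pow (Suc m)}"

text \<open>NC-filtration: F^d R is the span of all products
  r0 * l1 * r1 * ... * lm * rm with m \<ge> 1, l_j \<in> lie_pow i_j, i_j \<ge> 1,
  and (i_1 - 1) + ... + (i_m - 1) = d. A triple (i, l, r) encodes the factor l_j * r_j.\<close>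
definition nc_filt :: "nat \<Rightarrow> 'a::complex_algebra_1 set" where
  "nc_filt d = cspan {r0 * prod_list (map (\<lambda>(i, l, r). l * r) ps) | r0 ps.
      ps \<noteq> [] \<and> (\<forall>(i, l, r) \<in> set ps. 1 \<le> i \<and> l \<in> lie_pow i) \<and>
      sum_list (map (\<lambda>(i, l, r). i - 1) ps) = d}"

definition nc_nilpotent :: "'a::complex_algebra_1 itself \<Rightarrow> bool" where
  "nc_nilpotent _ \<longleftrightarrow> (\<exists>N. \<forall>i\<ge>N. nc_filt i = ({0} :: 'a set))"

text \<open>The two-sided ideal [R,R] generated by commutators, and the abelianization
  map \<pi> : R \<rightarrow> R_ab = R/[R,R], sending x to its coset.\<close>
definition comm_ideal :: "'a::complex_algebra_1 set" where
  "comm_ideal = cspan {x * commutator a b * y | x a b y. True}"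

definition ab_class :: "'a::complex_algebra_1 \<Rightarrow> 'a set" where
  "ab_class x = {y. x - y \<in> comm_ideal}"

definition R_ab :: "'a::complex_algebra_1 set set" where
  "R_ab = range ab_class"

definition ab_mult :: "'a::complex_algebra_1 set \<Rightarrow> 'a set \<Rightarrow> 'a set" where
  "ab_mult A B = ab_class ((SOME a. A = ab_class a) * (SOME b. B = ab_class b))"

definition multiplicative_subset :: "'a::complex_algebra_1 set set \<Rightarrow> bool" where
  "multiplicative_subset T \<longleftrightarrow> T \<subseteq> R_ab \<and> ab_class 1 \<in> T \<and>
     (\<forall>A\<in>T. \<forall>B\<in>T. ab_mult A B \<in> T)"

end

theory Submission
  imports Defs
begin

lemma ad_lie: "((commutator x) ^^ k) (a::'a::complex_algebra_1) \<in> lie_pow (Suc k)"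
proof (induction k)
  case 0 then show ?case by simp
next
  case (Suc k)
  then show ?case by (auto intro!: cspan_base)
qed

lemma lie_filt: "(l::'a::complex_algebra_1) \<in> lie_pow (Suc k) \<Longrightarrow> l \<in> nc_filt k"
  unfolding nc_filt_def
  apply (rule cspan_base)
  apply (rule CollectI)
  apply (rule exI[of _ 1])
  apply (rule exI[of _ "[(Suc k, l, 1)]"])
  by simp

lemma ad_nil:
  assumes "nc_nilpotent TYPE('a::complex_algebra_1)"
  shows "\<exists>N. \<forall>x (a::'a). ((commutator x) ^^ N) a = 0"
proof -
  obtain N where N: "\<forall>i\<ge>N. nc_filt i = ({0} :: 'a set)"
    using assms unfolding nc_nilpotent_def by blast
  show ?thesis
  proof (intro exI allI)
    fix x a :: 'a
    have "((commutator x) ^^ N) a \<in> nc_filt N" by (rule lie_filt[OF ad_lie])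
    then show "((commutator x) ^^ N) a = 0" using N by auto
  qed
qed

lemma ol1: "((commutator s) ^^ k) (a::'a::ring_1) = 0 \<Longrightarrow> \<exists>b. s ^ k * a = b * s"
proof (induction k arbitrary: a)
  case 0 then show ?case by (auto intro: exI[of _ 0])
next
  case (Suc k)
  have "((commutator s) ^^ k) (commutator s a) = 0" using Suc.prems
    by (simp add: funpow_Suc_right del: funpow.simps)
  then obtain b where b: "s ^ k * commutator s a = b * s" using Suc.IH by blast
  have "s ^ Suc k * a = s ^ k * (s * a)" by (simp only: power_Suc2 mult.assoc)
  also have "s * a = a * s + commutator s a" by (simp add: commutator_def)
  also have "s ^ k * (a * s + commutator s a) = (s ^ k * a + b) * s"
    using b by (simp add: distrib_left distrib_right mult.assoc)
  finally show ?case by blast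
qed

lemma or1: "((commutator s) ^^ k) (b::'a::ring_1) = 0 \<Longrightarrow> \<exists>a. b * s ^ k = s * a"
proof (induction k arbitrary: b)
  case 0 then show ?case by (auto intro: exI[of _ 0])
next
  case (Suc k)
  have "((commutator s) ^^ k) (commutator s b) = 0" using Suc.prems
    by (simp add: funpow_Suc_right del: funpow.simps)
  then obtain a where a: "commutator s b * s ^ k = s * a" using Suc.IH by blast
  have "b * s ^ Suc k = (b * s) * s ^ k" by (simp add: mult.assoc)
  also have "b * s = s * b - commutator s b" by (simp add: commutator_def)
  also have "(s * b - commutator s b) * s ^ k = s * (b * s ^ k - a)"
    using a by (simp add: left_diff_distrib right_diff_distrib mult.assoc)
  finally show ?case by blast
qed

lemma ol2: "((commutator s) ^^ k) (a::'a::ring_1) = 0 \<Longrightarrow> a * s = 0 \<Longrightarrow> s ^ k * a = 0"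
proof (induction k arbitrary: a)
  case 0 then show ?case by simp
next
  case (Suc k)
  have "((commutator s) ^^ k) (commutator s a) = 0" using Suc.prems
    by (simp add: funpow_Suc_right del: funpow.simps)
  moreover have "commutator s a * s = 0" using Suc.prems(2)
    by (simp add: commutator_def left_diff_distrib mult.assoc)
  ultimately have b: "s ^ k * commutator s a = 0" using Suc.IH by blast
  have "s ^ Suc k * a = s ^ k * (s * a)" by (simp only: power_Suc2 mult.assoc)
  also have "s * a = a * s + commutator s a" by (simp add: commutator_def)
  also have "s ^ k * (a * s + commutator s a) = 0"
    using b Suc.prems(2) by (simp add: distrib_left)
  finally show ?case .
qed

lemma or2: "((commutator s) ^^ k) (a::'a::ring_1) = 0 \<Longrightarrow> s * a = 0 \<Longrightarrow> a * s ^ k = 0"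
proof (induction k arbitrary: a)
  case 0 then show ?case by simp
next
  case (Suc k)
  have "((commutator s) ^^ k) (commutator s a) = 0" using Suc.prems
    by (simp add: funpow_Suc_right del: funpow.simps)
  moreover have "s * commutator s a = 0" using Suc.prems(2)
    by (simp add: commutator_def right_diff_distrib mult.assoc[symmetric])
  ultimately have b: "commutator s a * s ^ k = 0" using Suc.IH by blast
  have "a * s ^ Suc k = (a * s) * s ^ k" by (simp add: mult.assoc)
  also have "a * s = s * a - commutator s a" by (simp add: commutator_def)
  also have "(s * a - commutator s a) * s ^ k = 0"
    using b Suc.prems(2) by (simp add: left_diff_distrib mult.assoc)
  finally show ?case .
qed

lemma scaleC_zero_left: "scaleC 0 (x::'a::complex_algebra_1) = 0"
proof -
  have "scaleC 0 x = scaleC 0 x + scaleC 0 x" using scaleC_add_left[of 0 0 x] by simp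
  then show ?thesis by simp
qed

lemma scaleC_neg1: "scaleC (-1) (x::'a::complex_algebra_1) = - x"
proof -
  have "scaleC 1 x + scaleC (-1) x = scaleC (1 + -1) x" by (rule scaleC_add_left[symmetric])
  also have "\<dots> = 0" using scaleC_zero_left[of x] by simp
  finally have "scaleC 1 x + scaleC (-1) x = 0" .
  then have "x + scaleC (-1) x = 0" using scaleC_one[of x] by (simp only:)
  then show ?thesis by (rule minus_unique[symmetric])
qed

lemma ci_zero: "0 \<in> comm_ideal" unfolding comm_ideal_def by (rule cspan_zero)
lemma ci_add: "x \<in> comm_ideal \<Longrightarrow> y \<in> comm_ideal \<Longrightarrow> x + y \<in> comm_ideal"
  unfolding comm_ideal_def by (rule cspan_add)
lemma ci_neg: "(x::'a::complex_algebra_1) \<in> comm_ideal \<Longrightarrow> - x \<in> comm_ideal"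
proof -
  assume "x \<in> comm_ideal"
  then have "scaleC (-1) x \<in> comm_ideal" unfolding comm_ideal_def by (rule cspan_scale)
  then show ?thesis by (simp only: scaleC_neg1)
qed
lemma ci_diff: "(x::'a::complex_algebra_1) \<in> comm_ideal \<Longrightarrow> y \<in> comm_ideal \<Longrightarrow> x - y \<in> comm_ideal"
  using ci_add[OF _ ci_neg[of y]] by (simp only: diff_conv_add_uminus)

definition CG :: "'a::complex_algebra_1 set" where
  "CG = {x * commutator a b * y | x a b y. True}"

lemma ci_left: "(y::'a::complex_algebra_1) \<in> comm_ideal \<Longrightarrow> z * y \<in> comm_ideal"
  unfolding comm_ideal_def CG_def[symmetric]
proof (induction rule: cspan.induct)
  case cspan_zero
  have "z * 0 = (0::'a)" by simp
  then show ?case using cspan.cspan_zero by metis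
next
  case (cspan_base x)
  then obtain p a b q where "x = p * commutator a b * q" unfolding CG_def by blast
  then have "z * x = (z * p) * commutator a b * q" by (simp add: mult.assoc)
  moreover have "(z * p) * commutator a b * q \<in> CG" unfolding CG_def by blast
  ultimately show ?case using cspan.cspan_base by metis
next
  case (cspan_add x y)
  have "z * (x + y) = z * x + z * y" by (rule distrib_left)
  then show ?case using cspan.cspan_add[OF cspan_add.IH] by simp
next
  case (cspan_scale x c)
  have "z * scaleC c x = scaleC c (z * x)" by (rule scaleC_mult_right[symmetric])
  then show ?case using cspan.cspan_scale[OF cspan_scale.IH] by simp
qed

lemma ci_right: "(y::'a::complex_algebra_1) \<in> comm_ideal \<Longrightarrow> y * z \<in> comm_ideal"
  unfolding comm_ideal_def CG_def[symmetric]
proof (induction rule: cspan.induct)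
  case cspan_zero
  have "0 * z = (0::'a)" by simp
  then show ?case using cspan.cspan_zero by metis
next
  case (cspan_base x)
  then obtain p a b q where "x = p * commutator a b * q" unfolding CG_def by blast
  then have "x * z = p * commutator a b * (q * z)" by (simp add: mult.assoc)
  moreover have "p * commutator a b * (q * z) \<in> CG" unfolding CG_def by blast
  ultimately show ?case using cspan.cspan_base by metis
next
  case (cspan_add x y)
  have "(x + y) * z = x * z + y * z" by (rule distrib_right)
  then show ?case using cspan.cspan_add[OF cspan_add.IH] by simp
next
  case (cspan_scale x c)
  have "scaleC c x * z = scaleC c (x * z)" by (rule scaleC_mult_left[symmetric])
  then show ?case using cspan.cspan_scale[OF cspan_scale.IH] by simp
qed

lemma ab_class_eq: "ab_class x = ab_class (y::'a::complex_algebra_1) \<longleftrightarrow> x - y \<in> comm_ideal"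
proof
  assume e: "ab_class x = ab_class y"
  have "y \<in> ab_class y" unfolding ab_class_def using ci_zero by simp
  then have "y \<in> ab_class x" using e by (simp only:)
  then show "x - y \<in> comm_ideal" unfolding ab_class_def by (rule CollectD)
next
  assume h: "x - y \<in> comm_ideal"
  show "ab_class x = ab_class y"
  proof (rule set_eqI)
    fix z
    have e1: "x - z = (x - y) + (y - z)" by (simp add: algebra_simps)
    have e2: "y - z = (x - z) - (x - y)" by (simp add: algebra_simps)
    show "z \<in> ab_class x \<longleftrightarrow> z \<in> ab_class y"
    proof
      assume "z \<in> ab_class x"
      then have "x - z \<in> comm_ideal" unfolding ab_class_def by (rule CollectD)
      then have "(x - z) - (x - y) \<in> comm_ideal" using h by (rule ci_diff)
      then have "y - z \<in> comm_ideal" by (simp only: e2[symmetric])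
      then show "z \<in> ab_class y" unfolding ab_class_def by (rule CollectI)
    next
      assume "z \<in> ab_class y"
      then have "y - z \<in> comm_ideal" unfolding ab_class_def by (rule CollectD)
      then have "(x - y) + (y - z) \<in> comm_ideal" using h by (intro ci_add)
      then have "x - z \<in> comm_ideal" by (simp only: e1[symmetric])
      then show "z \<in> ab_class x" unfolding ab_class_def by (rule CollectI)
    qed
  qed
qed

lemma ab_mult_class: "ab_mult (ab_class x) (ab_class y) = ab_class ((x::'a::complex_algebra_1) * y)"
proof -
  define x' where "x' = (SOME a. ab_class x = ab_class a)"
  define y' where "y' = (SOME a. ab_class y = ab_class a)"
  have hx: "ab_class x = ab_class x'" unfolding x'_def by (rule someI[of _ x]) simp
  have hy: "ab_class y = ab_class y'" unfolding y'_def by (rule someI[of _ y]) simp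
  have "x' * y' - x * y = (x' - x) * y' + x * (y' - y)" by (simp add: algebra_simps)
  moreover have "x' - x \<in> comm_ideal" by (rule ab_class_eq[THEN iffD1, OF hx[symmetric]])
  moreover have "y' - y \<in> comm_ideal" by (rule ab_class_eq[THEN iffD1, OF hy[symmetric]])
  ultimately have "x' * y' - x * y \<in> comm_ideal"
    using ci_add[OF ci_right[of "x' - x" y'] ci_left[of "y' - y" x]] by simp
  then have "ab_class (x' * y') = ab_class (x * y)" by (rule ab_class_eq[THEN iffD2])
  then show ?thesis unfolding ab_mult_def x'_def y'_def by (simp only:)
qed

lemma pow_S:
  assumes "multiplicative_subset Sbar" "ab_class (s::'a::complex_algebra_1) \<in> Sbar"
  shows "ab_class (s ^ k) \<in> Sbar"
proof (induction k)
  case 0 then show ?case using assms(1) unfolding multiplicative_subset_def by simp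
next
  case (Suc k)
  then have "ab_mult (ab_class s) (ab_class (s ^ k)) \<in> Sbar"
    using assms unfolding multiplicative_subset_def by blast
  then show ?case by (simp only: ab_mult_class power_Suc)
qed

theorem proposition2p1p5:
  fixes Sbar :: "'a::complex_algebra_1 set set"
  assumes "nc_nilpotent TYPE('a)"
    and "multiplicative_subset Sbar"
    and "Sbar \<subseteq> R_ab - {ab_class 0}"
  defines "S \<equiv> {x. ab_class x \<in> Sbar}"
  shows "(\<forall>a s. s \<in> S \<longrightarrow> (\<exists>b u. u \<in> S \<and> u * a = b * s))
    \<and> (\<forall>a s. s \<in> S \<longrightarrow> a * s = 0 \<longrightarrow> (\<exists>t\<in>S. t * a = 0))
    \<and> (\<forall>b u. u \<in> S \<longrightarrow> (\<exists>a s. s \<in> S \<and> u * a = b * s))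
    \<and> (\<forall>a s. s \<in> S \<longrightarrow> s * a = 0 \<longrightarrow> (\<exists>t\<in>S. a * t = 0))"
proof -
  obtain N where N: "\<forall>x (a::'a). ((commutator x) ^^ N) a = 0" using ad_nil[OF assms(1)] by blast
  have pS: "s ^ k \<in> S" if "s \<in> S" for s k using pow_S[OF assms(2)] that unfolding S_def by blast
  have 1: "\<forall>a s. s \<in> S \<longrightarrow> (\<exists>b u. u \<in> S \<and> u * a = b * s)"
  proof (intro allI impI)
    fix a s assume s: "s \<in> S"
    obtain b where "s ^ N * a = b * s" using ol1 N by blast
    then show "\<exists>b u. u \<in> S \<and> u * a = b * s" using pS[OF s] by blast
  qed
  have 2: "\<forall>a s. s \<in> S \<longrightarrow> a * s = 0 \<longrightarrow> (\<exists>t\<in>S. t * a = 0)"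
  proof (intro allI impI)
    fix a s assume s: "s \<in> S" and h: "a * s = 0"
    have "s ^ N * a = 0" using ol2 N h by blast
    then show "\<exists>t\<in>S. t * a = 0" using pS[OF s] by blast
  qed
  have 3: "\<forall>b u. u \<in> S \<longrightarrow> (\<exists>a s. s \<in> S \<and> u * a = b * s)"
  proof (intro allI impI)
    fix b u assume u: "u \<in> S"
    obtain a where "b * u ^ N = u * a" using or1 N by blast
    then show "\<exists>a s. s \<in> S \<and> u * a = b * s" using pS[OF u] by (metis)
  qed
  have 4: "\<forall>a s. s \<in> S \<longrightarrow> s * a = 0 \<longrightarrow> (\<exists>t\<in>S. a * t = 0)"
  proof (intro allI impI)
    fix a s assume s: "s \<in> S" and h: "s * a = 0"
    have "a * s ^ N = 0" using or2 N h by blast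
    then show "\<exists>t\<in>S. a * t = 0" using pS[OF s] by blast
  qed
  show ?thesis using 1 2 3 4 by blast
qed

end
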